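(* Let $A_1,\dots,A_n$ be fixed positive-semidefinite $d\times d$ matrices (real or complex) and $k\in\mathbb{N}$. Let $(\delta_1,\dots,\delta_n)\sim\textsc{multinomial}(k,n)$ (the occupancy counts of $k$ balls placed independently and uniformly at random in $n$ bins), and let $Q_1,\dots,Q_n$ be iid $\textsc{poisson}(k/n)$ random variables. Define $\widehat Y_n=\sum_{i=1}^n\delta_iA_i$ and $X_n=\sum_{i=1}^nQ_iA_i$. Then for all $\theta\ge0$, \[ \mathbb{E}\operatorname{Tr}e^{-\theta(\widehat Y_n-\mathbb{E}\widehat Y_n)}\le2\,\mathbb{E}\operatorname{Tr}e^{-\theta(X_n-\mathbb{E}X_n)}. \]
   Context: $e^M$ is the matrix exponential. Note $\mathbb{E}\widehat Y_n=\mathbb{E}X_n=\frac kn\sum_{i=1}^nA_i$. *)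

theory Defs
  imports "HOL-Analysis.Analysis" "HOL-Probability.Probability"
begin

text \<open>Matrix power with respect to matrix multiplication (note: ^ on vec is componentwise).\<close>
primrec matrix_pow :: "'a::semiring_1^'n^'n \<Rightarrow> nat \<Rightarrow> 'a^'n^'n" where
  "matrix_pow M 0 = mat 1"
| "matrix_pow M (Suc m) = M ** matrix_pow M m"

definition mexp :: "complex^'n^'n \<Rightarrow> complex^'n^'n" where
  "mexp M = (\<Sum>m. (1 / fact m) *\<^sub>R matrix_pow M m)"

definition hermitian :: "complex^'n^'n \<Rightarrow> bool" where
  "hermitian A \<longleftrightarrow> (\<forall>i j. A $ i $ j = cnj (A $ j $ i))"

definition psd :: "complex^'n^'n \<Rightarrow> bool" where
  "psd A \<longleftrightarrow> hermitian A \<and>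
     (\<forall>x::complex^'n. 0 \<le> Re (\<Sum>i\<in>UNIV. \<Sum>j\<in>UNIV. cnj (x $ i) * A $ i $ j * x $ j))"

definition poisson :: "real \<Rightarrow> nat pmf" where
  "poisson r = (if 0 < r then poisson_pmf r else return_pmf 0)"

definition balls_in_bins :: "nat \<Rightarrow> nat \<Rightarrow> (nat \<Rightarrow> nat) pmf" where
  "balls_in_bins k n = Pi_pmf {..<k} 0 (\<lambda>_. pmf_of_set {..<n})"

text \<open>Occupancy count of bin i: delta_i.  (delta_0..delta_{n-1}) ~ multinomial(k,n).\<close>
definition occupancy :: "nat \<Rightarrow> (nat \<Rightarrow> nat) \<Rightarrow> nat \<Rightarrow> nat" where
  "occupancy k f i = card {j\<in>{..<k}. f j = i}"

end

theory Submission
  imports Defs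
begin

definition L1 :: "complex^'n^'n \<Rightarrow> real" where
  "L1 M = (\<Sum>i\<in>UNIV. \<Sum>j\<in>UNIV. norm (M $ i $ j))"

lemma L1_nonneg: "0 \<le> L1 M"
  unfolding L1_def by (intro sum_nonneg) auto

lemma entry_le_L1: "norm (M $ i $ j) \<le> L1 M"
proof -
  have "norm (M $ i $ j) \<le> (\<Sum>j\<in>UNIV. norm (M $ i $ j))"
    by (rule member_le_sum) auto
  also have "\<dots> \<le> L1 M" unfolding L1_def
    by (rule member_le_sum[where f="\<lambda>i. \<Sum>j\<in>UNIV. norm (M $ i $ j)"]) (auto intro: sum_nonneg)
  finally show ?thesis .
qed

lemma norm_le_L1: "norm M \<le> L1 M"
proof -
  have "norm M \<le> (\<Sum>i\<in>UNIV. norm (M $ i))"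
    unfolding norm_vec_def by (rule L2_set_le_sum) auto
  also have "\<dots> \<le> (\<Sum>i\<in>UNIV. \<Sum>j\<in>UNIV. norm (M $ i $ j))"
    by (intro sum_mono) (simp add: norm_vec_def L2_set_le_sum)
  finally show ?thesis unfolding L1_def .
qed

lemma L1_mult: "L1 (A ** B) \<le> L1 A * L1 B"
proof -
  have "L1 (A ** B) = (\<Sum>i\<in>UNIV. \<Sum>j\<in>UNIV. norm (\<Sum>k\<in>UNIV. A$i$k * B$k$j))"
    unfolding L1_def matrix_matrix_mult_def by simp
  also have "\<dots> \<le> (\<Sum>i\<in>UNIV. \<Sum>j\<in>UNIV. \<Sum>k\<in>UNIV. norm (A$i$k) * norm (B$k$j))"
    by (intro sum_mono order_trans[OF norm_sum]) (simp add: norm_mult)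
  also have "\<dots> = (\<Sum>i\<in>UNIV. \<Sum>k\<in>UNIV. \<Sum>j\<in>UNIV. norm (A$i$k) * norm (B$k$j))"
    by (intro sum.cong refl sum.swap)
  also have "\<dots> \<le> (\<Sum>i\<in>UNIV. \<Sum>k\<in>UNIV. norm (A$i$k) * L1 B)"
  proof (intro sum_mono)
    fix i k
    have "(\<Sum>j\<in>UNIV. norm (A$i$k) * norm (B$k$j)) = norm (A$i$k) * (\<Sum>j\<in>UNIV. norm (B$k$j))"
      by (simp add: sum_distrib_left)
    also have "\<dots> \<le> norm (A$i$k) * L1 B"
      unfolding L1_def
      by (intro mult_left_mono member_le_sum[where f="\<lambda>k. \<Sum>j\<in>UNIV. norm (B $ k $ j)"]) (auto intro: sum_nonneg)
    finally show "(\<Sum>j\<in>UNIV. norm (A$i$k) * norm (B$k$j)) \<le> norm (A$i$k) * L1 B" .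
  qed
  also have "\<dots> = L1 A * L1 B"
    unfolding L1_def by (simp add: sum_distrib_right)
  finally show ?thesis .
qed

lemma L1_add: "L1 (A + B) \<le> L1 A + L1 B"
  unfolding L1_def by (simp add: sum.distrib[symmetric] sum_mono norm_triangle_ineq)

lemma L1_scaleR: "L1 (r *\<^sub>R A) = \<bar>r\<bar> * L1 A"
  unfolding L1_def by (simp add: sum_distrib_left)

lemma L1_minus: "L1 (- A) = L1 A"
  unfolding L1_def by simp

lemma L1_diff: "L1 (A - B) \<le> L1 A + L1 B"
  using L1_add[of A "- B"] by (simp add: L1_minus)

lemma L1_one: "L1 (mat 1 :: complex^'n^'n) = real CARD('n)"
proof -
  have "L1 (mat 1 :: complex^'n^'n) = (\<Sum>i\<in>(UNIV::'n set). \<Sum>j\<in>UNIV. if i = j then 1 else 0)"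
    unfolding L1_def mat_def by (intro sum.cong refl) auto
  also have "\<dots> = real CARD('n)" by simp
  finally show ?thesis .
qed

lemma L1_pow: "L1 (matrix_pow M m) \<le> real CARD('n) * L1 M ^ m" for M :: "complex^'n^'n"
proof (induction m)
  case 0 then show ?case by (simp add: L1_one)
next
  case (Suc m)
  have "L1 (matrix_pow M (Suc m)) \<le> L1 M * L1 (matrix_pow M m)" by (simp add: L1_mult)
  also have "\<dots> \<le> L1 M * (real CARD('n) * L1 M ^ m)"
    by (intro mult_left_mono Suc L1_nonneg)
  finally show ?case by (simp add: algebra_simps)
qed

lemma mmult_scaleR_left: "(r *\<^sub>R A) ** B = r *\<^sub>R (A ** (B::complex^'n^'n))"
  by (simp add: vec_eq_iff matrix_matrix_mult_def scaleR_sum_right)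

lemma mmult_scaleR_right: "A ** (r *\<^sub>R B) = r *\<^sub>R (A ** (B::complex^'n^'n))"
  by (simp add: vec_eq_iff matrix_matrix_mult_def scaleR_sum_right)

lemma matrix_pow_Suc': "matrix_pow M (Suc m) = matrix_pow M m ** M"
  by (induction m) (simp_all add: matrix_mul_assoc)

lemma matrix_pow_comm: "matrix_pow M m ** M = M ** matrix_pow M m"
  by (metis matrix_pow_Suc' matrix_pow.simps(2))

lemma matrix_pow_add: "matrix_pow M (a + b) = matrix_pow M a ** matrix_pow M b"
  by (induction a) (simp_all add: matrix_mul_assoc)

lemma matrix_pow_scaleR: "matrix_pow (r *\<^sub>R M) m = (r ^ m) *\<^sub>R matrix_pow (M::complex^'n^'n) m"
  by (induction m) (simp_all add: mmult_scaleR_left mmult_scaleR_right)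

lemma summable_exp_bound: "summable (\<lambda>m. c * x ^ m / fact m :: real)"
proof -
  have "summable (\<lambda>m. c * (inverse (fact m) * x ^ m))"
    by (intro summable_mult summable_exp)
  then show ?thesis by (simp add: field_simps)
qed

lemma norm_mexp_term_le:
  "norm ((1 / fact m) *\<^sub>R matrix_pow (M::complex^'n^'n) m) \<le> real CARD('n) * L1 M ^ m / fact m"
proof -
  have "norm ((1 / fact m) *\<^sub>R matrix_pow M m) = norm (matrix_pow M m) / fact m" by simp
  also have "\<dots> \<le> L1 (matrix_pow M m) / fact m"
    by (intro divide_right_mono norm_le_L1) auto
  also have "\<dots> \<le> real CARD('n) * L1 M ^ m / fact m"
    by (intro divide_right_mono L1_pow) auto
  finally show ?thesis .
qed

lemma summable_mexp_norm: "summable (\<lambda>m. norm ((1 / fact m) *\<^sub>R matrix_pow (M::complex^'n^'n) m))"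
proof (rule summable_comparison_test'[OF summable_exp_bound[of "real CARD('n)" "L1 M"], where N=0])
  fix m show "norm (norm ((1 / fact m) *\<^sub>R matrix_pow M m)) \<le> real CARD('n) * L1 M ^ m / fact m"
    using norm_mexp_term_le[of m M] by (simp only: real_norm_def abs_norm_cancel)
qed

lemma summable_mexp: "summable (\<lambda>m. (1 / fact m) *\<^sub>R matrix_pow (M::complex^'n^'n) m)"
  by (rule summable_norm_cancel[OF summable_mexp_norm])

lemma mexp_sums: "(\<lambda>m. (1 / fact m) *\<^sub>R matrix_pow (M::complex^'n^'n) m) sums mexp M"
  unfolding mexp_def using summable_mexp by (rule summable_sums)

lemma entry_term_le:
  "norm ((1 / fact m) *\<^sub>R (matrix_pow (M::complex^'n^'n) m $ i $ j)) \<le> real CARD('n) * L1 M ^ m / fact m"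
proof -
  have "norm ((1 / fact m) *\<^sub>R (matrix_pow M m $ i $ j)) = norm (matrix_pow M m $ i $ j) / fact m" by simp
  also have "\<dots> \<le> L1 (matrix_pow M m) / fact m"
    by (intro divide_right_mono entry_le_L1) auto
  also have "\<dots> \<le> real CARD('n) * L1 M ^ m / fact m"
    by (intro divide_right_mono L1_pow) auto
  finally show ?thesis .
qed

lemma summable_entry_norm:
  "summable (\<lambda>m. norm ((1 / fact m) *\<^sub>R (matrix_pow (M::complex^'n^'n) m $ i $ j)))"
proof (rule summable_comparison_test'[OF summable_exp_bound[of "real CARD('n)" "L1 M"], where N=0])
  fix m show "norm (norm ((1 / fact m) *\<^sub>R (matrix_pow M m $ i $ j))) \<le> real CARD('n) * L1 M ^ m / fact m"
    using entry_term_le[of m M i j] by (simp only: real_norm_def abs_norm_cancel)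
qed

lemma mexp_entry_sums:
  "(\<lambda>m. (1 / fact m) *\<^sub>R (matrix_pow (M::complex^'n^'n) m $ i $ j)) sums (mexp M $ i $ j)"
proof -
  have bl: "bounded_linear (\<lambda>x::complex^'n^'n. x $ i $ j)"
    using bounded_linear_compose[OF bounded_linear_vec_nth bounded_linear_vec_nth] by blast
  from bounded_linear.sums[OF bl mexp_sums[of M]] show ?thesis by simp
qed

definition ct :: "complex^'n^'n \<Rightarrow> complex^'n^'n" where
  "ct M = (\<chi> i j. cnj (M $ j $ i))"

lemma ct_nth[simp]: "ct M $ i $ j = cnj (M $ j $ i)"
  unfolding ct_def by simp

lemma hermitian_ct: "hermitian M \<longleftrightarrow> ct M = M"
proof
  assume h: "hermitian M"
  have "cnj (M $ j $ i) = M $ i $ j" for i j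
    using h unfolding hermitian_def by (metis complex_cnj_cnj)
  then show "ct M = M" by (simp add: vec_eq_iff)
next
  assume "ct M = M"
  then have "\<And>i j. ct M $ i $ j = M $ i $ j" by simp
  then show "hermitian M" unfolding hermitian_def by simp
qed

lemma ct_mult: "ct (A ** B) = ct B ** ct A"
  by (simp add: vec_eq_iff matrix_matrix_mult_def mult.commute)

lemma hermitian_pow: "hermitian M \<Longrightarrow> hermitian (matrix_pow M m)"
proof (induction m)
  case 0 then show ?case by (simp add: hermitian_def mat_def)
next
  case (Suc m)
  then have "ct (matrix_pow M (Suc m)) = matrix_pow M (Suc m)"
    by (simp add: hermitian_ct ct_mult matrix_pow_Suc' matrix_pow_comm)
  then show ?case by (simp add: hermitian_ct)
qed

lemma hermitian_mexp: "hermitian M \<Longrightarrow> hermitian (mexp M)"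
  unfolding hermitian_def
proof (intro allI)
  fix i j assume h: "\<forall>i j. M $ i $ j = cnj (M $ j $ i)"
  have hp: "\<And>m. matrix_pow M m $ i $ j = cnj (matrix_pow M m $ j $ i)"
    using hermitian_pow[of M] h unfolding hermitian_def by blast
  have "(\<lambda>m. (1 / fact m) *\<^sub>R (matrix_pow M m $ i $ j)) sums (mexp M $ i $ j)"
    by (rule mexp_entry_sums)
  moreover have "(\<lambda>m. (1 / fact m) *\<^sub>R (matrix_pow M m $ i $ j)) sums cnj (mexp M $ j $ i)"
    using sums_cnj[THEN iffD2, OF mexp_entry_sums[of M j i]] by (simp add: hp scaleR_conv_of_real)
  ultimately show "mexp M $ i $ j = cnj (mexp M $ j $ i)" by (rule sums_unique2)
qed

lemma ct_add: "ct (A + B) = ct A + ct B" by (simp add: vec_eq_iff)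
lemma ct_diff: "ct (A - B) = ct A - ct B" by (simp add: vec_eq_iff)
lemma ct_scaleR: "ct (r *\<^sub>R A) = r *\<^sub>R ct A" by (simp add: vec_eq_iff)
lemma ct_zero: "ct 0 = 0" by (simp add: vec_eq_iff)
lemma ct_sum: "ct (sum f S) = (\<Sum>i\<in>S. ct (f i))"
  by (induction S rule: infinite_finite_induct) (auto simp: ct_add ct_zero)
lemma ct_one: "ct (mat 1) = mat 1" by (simp add: vec_eq_iff mat_def)

lemma hermitian_add: "hermitian A \<Longrightarrow> hermitian B \<Longrightarrow> hermitian (A + B)"
  by (simp add: hermitian_ct ct_add)
lemma hermitian_diff: "hermitian A \<Longrightarrow> hermitian B \<Longrightarrow> hermitian (A - B)"
  by (simp add: hermitian_ct ct_diff)
lemma hermitian_scaleR: "hermitian A \<Longrightarrow> hermitian (r *\<^sub>R A)"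
  by (simp add: hermitian_ct ct_scaleR)
lemma hermitian_sum: "(\<And>i. i \<in> S \<Longrightarrow> hermitian (f i)) \<Longrightarrow> hermitian (sum f S)"
  by (simp add: hermitian_ct ct_sum)
lemma hermitian_one: "hermitian (mat 1)"
  by (simp add: hermitian_ct ct_one)

lemma scaled_entry_eq:
  "(1 / fact m) *\<^sub>R (matrix_pow (r *\<^sub>R X) m $ i $ j) = complex_of_real (r ^ m / fact m) * (matrix_pow (X::complex^'n^'n) m $ i $ j)"
proof -
  have "(1 / fact m) *\<^sub>R (matrix_pow (r *\<^sub>R X) m $ i $ j) = (1 / fact m) *\<^sub>R ((r ^ m) *\<^sub>R (matrix_pow X m $ i $ j))"
    by (simp only: matrix_pow_scaleR vector_scaleR_component)
  also have "\<dots> = complex_of_real (r ^ m / fact m) * (matrix_pow X m $ i $ j)"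
    by (simp add: scaleR_conv_of_real)
  finally show ?thesis .
qed

lemma mexp_scaled_entry_sums:
  "(\<lambda>m. complex_of_real (r ^ m / fact m) * (matrix_pow (X::complex^'n^'n) m $ i $ j)) sums (mexp (r *\<^sub>R X) $ i $ j)"
  using mexp_entry_sums[of "r *\<^sub>R X" i j] by (simp only: scaled_entry_eq)

lemma summable_scaled_entry_norm:
  "summable (\<lambda>m. norm (complex_of_real (r ^ m / fact m) * (matrix_pow (X::complex^'n^'n) m $ i $ j)))"
  using summable_entry_norm[of "r *\<^sub>R X" i j] by (simp only: scaled_entry_eq)

lemma binom_fact_sum:
  "(\<Sum>l\<le>m. (a::real) ^ l / fact l * (b ^ (m - l) / fact (m - l))) = (a + b) ^ m / fact m"
proof -
  have "(a + b) ^ m = (\<Sum>l\<le>m. of_nat (m choose l) * a ^ l * b ^ (m - l))"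
    by (rule binomial_ring)
  also have "\<dots> = (\<Sum>l\<le>m. fact m * (a ^ l / fact l * (b ^ (m - l) / fact (m - l))))"
    by (intro sum.cong refl) (simp add: binomial_fact field_simps)
  also have "\<dots> = fact m * (\<Sum>l\<le>m. a ^ l / fact l * (b ^ (m - l) / fact (m - l)))"
    by (simp add: sum_distrib_left)
  finally show ?thesis by (simp add: field_simps)
qed

lemma mexp_mult_scaled:
  "mexp (a *\<^sub>R X) ** mexp (b *\<^sub>R X) = mexp ((a + b) *\<^sub>R (X::complex^'n^'n))"
proof -
  let ?P = "matrix_pow X"
  have "(mexp (a *\<^sub>R X) ** mexp (b *\<^sub>R X)) $ i $ j = mexp ((a + b) *\<^sub>R X) $ i $ j" for i j
  proof -
    let ?u = "\<lambda>k m. complex_of_real (a ^ m / fact m) * (?P m $ i $ k)"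
    let ?v = "\<lambda>k m. complex_of_real (b ^ m / fact m) * (?P m $ k $ j)"
    have c: "(\<lambda>m. \<Sum>l\<le>m. ?u k l * ?v k (m - l)) sums (mexp (a *\<^sub>R X) $ i $ k * mexp (b *\<^sub>R X) $ k $ j)" for k
    proof -
      have "(\<lambda>m. \<Sum>l\<le>m. ?u k l * ?v k (m - l)) sums ((\<Sum>m. ?u k m) * (\<Sum>m. ?v k m))"
        by (rule Cauchy_product_sums[OF summable_scaled_entry_norm summable_scaled_entry_norm])
      moreover have "(\<Sum>m. ?u k m) = mexp (a *\<^sub>R X) $ i $ k"
        using mexp_scaled_entry_sums by (rule sums_unique[symmetric])
      moreover have "(\<Sum>m. ?v k m) = mexp (b *\<^sub>R X) $ k $ j"
        using mexp_scaled_entry_sums by (rule sums_unique[symmetric])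
      ultimately show ?thesis by simp
    qed
    have s: "(\<lambda>m. \<Sum>k\<in>UNIV. \<Sum>l\<le>m. ?u k l * ?v k (m - l)) sums (mexp (a *\<^sub>R X) ** mexp (b *\<^sub>R X)) $ i $ j"
      unfolding matrix_matrix_mult_def using sums_sum[OF c] by simp
    have e: "(\<Sum>k\<in>UNIV. \<Sum>l\<le>m. ?u k l * ?v k (m - l)) = complex_of_real ((a + b) ^ m / fact m) * (?P m $ i $ j)" for m
    proof -
      have "(\<Sum>k\<in>UNIV. \<Sum>l\<le>m. ?u k l * ?v k (m - l))
          = (\<Sum>l\<le>m. complex_of_real (a ^ l / fact l * (b ^ (m - l) / fact (m - l))) * (\<Sum>k\<in>UNIV. ?P l $ i $ k * ?P (m - l) $ k $ j))"
        by (subst sum.swap) (simp add: sum_distrib_left mult_ac)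
      also have "\<dots> = (\<Sum>l\<le>m. complex_of_real (a ^ l / fact l * (b ^ (m - l) / fact (m - l))) * (?P m $ i $ j))"
      proof (intro sum.cong refl)
        fix l assume "l \<in> {..m}"
        then have "?P m = ?P l ** ?P (m - l)" by (simp add: matrix_pow_add[symmetric])
        then show "complex_of_real (a ^ l / fact l * (b ^ (m - l) / fact (m - l))) * (\<Sum>k\<in>UNIV. ?P l $ i $ k * ?P (m - l) $ k $ j)
           = complex_of_real (a ^ l / fact l * (b ^ (m - l) / fact (m - l))) * (?P m $ i $ j)"
          by (simp add: matrix_matrix_mult_def)
      qed
      also have "\<dots> = complex_of_real (\<Sum>l\<le>m. a ^ l / fact l * (b ^ (m - l) / fact (m - l))) * (?P m $ i $ j)"
        by (simp add: sum_distrib_right)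
      also have "\<dots> = complex_of_real ((a + b) ^ m / fact m) * (?P m $ i $ j)"
        by (simp only: binom_fact_sum)
      finally show ?thesis .
    qed
    from s e have "(\<lambda>m. complex_of_real ((a + b) ^ m / fact m) * (?P m $ i $ j)) sums (mexp (a *\<^sub>R X) ** mexp (b *\<^sub>R X)) $ i $ j"
      by simp
    then show ?thesis using mexp_scaled_entry_sums sums_unique2 by blast
  qed
  then show ?thesis by (simp add: vec_eq_iff)
qed

lemma mexp_half_square: "mexp ((1/2) *\<^sub>R X) ** mexp ((1/2) *\<^sub>R X) = mexp (X::complex^'n^'n)"
  using mexp_mult_scaled[of "1/2" X "1/2"] by simp

lemma psd_trace_square_nonneg:
  assumes A: "psd A" and B: "hermitian B"
  shows "0 \<le> Re (trace (A ** (B ** B)))"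
proof -
  have hB: "B $ j $ i = cnj (B $ i $ j)" for i j
    using B unfolding hermitian_def by blast
  have q: "0 \<le> Re (\<Sum>i\<in>UNIV. \<Sum>l\<in>UNIV. cnj (x $ i) * A $ i $ l * x $ l)" for x
    using A unfolding psd_def by blast
  have "trace (A ** (B ** B)) = trace (B ** (A ** B))"
    using trace_mul_sym[of "A ** B" B] by (simp only: matrix_mul_assoc)
  also have "\<dots> = (\<Sum>j\<in>UNIV. \<Sum>i\<in>UNIV. \<Sum>l\<in>UNIV. B $ j $ i * A $ i $ l * B $ l $ j)"
    unfolding trace_def matrix_matrix_mult_def
    by (simp add: sum_distrib_left mult.assoc)
  also have "\<dots> = (\<Sum>j\<in>UNIV. \<Sum>i\<in>UNIV. \<Sum>l\<in>UNIV. cnj (B $ i $ j) * A $ i $ l * B $ l $ j)"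
  proof (intro sum.cong refl)
    fix j i l show "B $ j $ i * A $ i $ l * B $ l $ j = cnj (B $ i $ j) * A $ i $ l * B $ l $ j"
      by (simp only: hB[of j i])
  qed
  finally have "Re (trace (A ** (B ** B))) = (\<Sum>j\<in>UNIV. Re (\<Sum>i\<in>UNIV. \<Sum>l\<in>UNIV. cnj (B $ i $ j) * A $ i $ l * B $ l $ j))"
    by (simp only: Re_sum)
  also have "\<dots> \<ge> 0"
  proof (intro sum_nonneg)
    fix j
    show "0 \<le> Re (\<Sum>i\<in>UNIV. \<Sum>l\<in>UNIV. cnj (B $ i $ j) * A $ i $ l * B $ l $ j)"
      using q[of "\<chi> i. B $ i $ j"] by simp
  qed
  finally show ?thesis by simp
qed

lemma psd_trace_mexp_nonneg:
  assumes "psd A" "hermitian X"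
  shows "0 \<le> Re (trace (A ** mexp X))"
proof -
  have "hermitian (mexp ((1/2) *\<^sub>R X))"
    by (intro hermitian_mexp hermitian_scaleR assms(2))
  from psd_trace_square_nonneg[OF assms(1) this] show ?thesis
    by (simp only: mexp_half_square)
qed

lemma Re_cnj_mult_self: "0 \<le> Re (cnj z * z)"
  by simp

lemma psd_one: "psd (mat 1 :: complex^'n^'n)"
  unfolding psd_def
proof (intro conjI allI hermitian_one)
  fix x :: "complex^'n"
  have "(\<Sum>i\<in>UNIV. \<Sum>j\<in>UNIV. cnj (x $ i) * (mat 1 :: complex^'n^'n) $ i $ j * x $ j) = (\<Sum>i\<in>UNIV. cnj (x $ i) * x $ i)"
  proof (intro sum.cong refl)
    fix i
    have "cnj (x $ i) * (mat 1 :: complex^'n^'n) $ i $ j * x $ j = (if j = i then cnj (x $ i) * x $ i else 0)" for j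
      by (simp add: mat_def)
    then show "(\<Sum>j\<in>UNIV. cnj (x $ i) * (mat 1 :: complex^'n^'n) $ i $ j * x $ j) = cnj (x $ i) * x $ i"
      by simp
  qed
  then have "Re (\<Sum>i\<in>UNIV. \<Sum>j\<in>UNIV. cnj (x $ i) * (mat 1 :: complex^'n^'n) $ i $ j * x $ j) = (\<Sum>i\<in>UNIV. Re (cnj (x $ i) * x $ i))"
    by (simp only: Re_sum)
  also have "\<dots> \<ge> 0" by (intro sum_nonneg Re_cnj_mult_self)
  finally show "0 \<le> Re (\<Sum>i\<in>UNIV. \<Sum>j\<in>UNIV. cnj (x $ i) * (mat 1 :: complex^'n^'n) $ i $ j * x $ j)" .
qed

lemma trace_mexp_nonneg: "hermitian X \<Longrightarrow> 0 \<le> Re (trace (mexp (X::complex^'n^'n)))"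
  using psd_trace_mexp_nonneg[OF psd_one, of X] by (simp only: matrix_mul_lid)

lemma L1_le_norm: "L1 (M::complex^'n^'n) \<le> real CARD('n) * real CARD('n) * norm M"
proof -
  have "L1 M \<le> (\<Sum>i\<in>(UNIV::'n set). \<Sum>j\<in>(UNIV::'n set). norm M)"
    unfolding L1_def
  proof (intro sum_mono)
    fix i j
    show "norm (M $ i $ j) \<le> norm M"
    proof -
      have "norm (M $ i $ j) \<le> norm (M $ i)" by (rule Finite_Cartesian_Product.norm_nth_le)
      also have "\<dots> \<le> norm M" by (rule Finite_Cartesian_Product.norm_nth_le)
      finally show ?thesis .
    qed
  qed
  then show ?thesis by simp
qed

lemma bb_mmult: "bounded_bilinear (\<lambda>(A::complex^'n^'n) (B::complex^'n^'n). A ** B)"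
proof
  fix a a' b b' :: "complex^'n^'n" and r :: real
  show "(a + a') ** b = a ** b + a' ** b" by (simp add: vec_eq_iff matrix_matrix_mult_def distrib_right sum.distrib)
  show "a ** (b + b') = a ** b + a ** b'" by (rule matrix_add_ldistrib)
  show "r *\<^sub>R a ** b = r *\<^sub>R (a ** b)" by (rule mmult_scaleR_left)
  show "a ** r *\<^sub>R b = r *\<^sub>R (a ** b)" by (rule mmult_scaleR_right)
next
  let ?d = "real CARD('n) * real CARD('n)"
  show "\<exists>K. \<forall>(a::complex^'n^'n) (b::complex^'n^'n). norm (a ** b) \<le> norm a * norm b * K"
  proof -
   have "norm (a ** b) \<le> norm a * norm b * (?d * ?d)" for a b :: "complex^'n^'n"
   proof -
    have "norm (a ** b) \<le> L1 a * L1 b" using norm_le_L1 L1_mult order_trans by blast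
    also have "\<dots> \<le> (?d * norm a) * (?d * norm b)"
      by (intro mult_mono L1_le_norm L1_nonneg) auto
    finally show "norm (a ** b) \<le> norm a * norm b * (?d * ?d)" by (simp add: algebra_simps)
   qed
   then show ?thesis by (intro exI[of _ "?d * ?d"] allI)
  qed
qed

lemma bl_trace: "bounded_linear (trace :: complex^'n^'n \<Rightarrow> complex)"
proof -
  have "bounded_linear (\<lambda>M::complex^'n^'n. \<Sum>i\<in>UNIV. M $ i $ i)"
    by (intro bounded_linear_sum bounded_linear_compose[OF bounded_linear_vec_nth bounded_linear_vec_nth])
  then show ?thesis unfolding trace_def[abs_def] .
qed

lemma bl_Re_trace: "bounded_linear (\<lambda>M::complex^'n^'n. Re (trace M))"
  using bounded_linear_compose[OF bounded_linear_Re bl_trace] .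

lemma bl_Re_trace_mult: "bounded_linear (\<lambda>M::complex^'n^'n. Re (trace (A ** M)))"
  using bounded_linear_compose[OF bl_Re_trace bounded_bilinear.bounded_linear_right[OF bb_mmult]] .

lemma abs_Re_trace_le: "\<bar>Re (trace (M::complex^'n^'n))\<bar> \<le> L1 M"
proof -
  have "\<bar>Re (trace M)\<bar> \<le> norm (trace M)" by (rule abs_Re_le_cmod)
  also have "\<dots> \<le> (\<Sum>i\<in>UNIV. norm (M $ i $ i))" unfolding trace_def by (rule norm_sum)
  also have "\<dots> \<le> (\<Sum>i\<in>UNIV. \<Sum>j\<in>UNIV. norm (M $ i $ j))"
    by (intro sum_mono member_le_sum) auto
  finally show ?thesis unfolding L1_def .
qed

primrec Dm :: "complex^'n^'n \<Rightarrow> complex^'n^'n \<Rightarrow> nat \<Rightarrow> real \<Rightarrow> complex^'n^'n" where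
  "Dm H A 0 t = 0"
| "Dm H A (Suc m) t = (- A) ** matrix_pow (H - t *\<^sub>R A) m + (H - t *\<^sub>R A) ** Dm H A m t"

lemma deriv_lin: "((\<lambda>t. H - t *\<^sub>R A) has_vector_derivative - (A::complex^'n^'n)) (at t)"
  by (auto intro!: derivative_eq_intros)

lemma deriv_pow:
  "((\<lambda>t. matrix_pow (H - t *\<^sub>R A) m) has_vector_derivative Dm H A m t) (at t)"
proof (induction m)
  case 0 then show ?case by simp
next
  case (Suc m)
  have "((\<lambda>t. (H - t *\<^sub>R A) ** matrix_pow (H - t *\<^sub>R A) m) has_vector_derivative
          ((H - t *\<^sub>R A) ** Dm H A m t + (- A) ** matrix_pow (H - t *\<^sub>R A) m)) (at t)"
    using bounded_bilinear.has_vector_derivative[OF bb_mmult deriv_lin Suc] by simp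
  then show ?case by (simp add: add.commute)
qed

lemma trace_mult_neg: "trace ((- A) ** B) = - trace (A ** (B::complex^'n^'n))"
  by (simp add: trace_def matrix_matrix_mult_def sum_negf)

lemma ring_helper: "- T + - (1 + c) * T = - (1 + (1 + c)) * (T::complex)"
  by (simp add: algebra_simps)

lemma trace_D:
  "trace (matrix_pow (H - t *\<^sub>R A) j ** Dm H A (Suc m) t) = - of_nat (Suc m) * trace (A ** matrix_pow (H - t *\<^sub>R A) (j + m))"
proof (induction m arbitrary: j)
  case 0
  have "trace (matrix_pow (H - t *\<^sub>R A) j ** - A) = trace ((- A) ** matrix_pow (H - t *\<^sub>R A) j)"
    by (rule trace_mul_sym)
  then show ?case by (simp add: trace_mult_neg)
next
  case (Suc m)
  let ?X = "H - t *\<^sub>R A"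
  let ?P = "matrix_pow ?X"
  have "trace (?P j ** Dm H A (Suc (Suc m)) t) = trace (?P j ** ((- A) ** ?P (Suc m))) + trace (?P j ** (?X ** Dm H A (Suc m) t))"
    by (simp add: matrix_add_ldistrib trace_add)
  also have "trace (?P j ** ((- A) ** ?P (Suc m))) = - trace (A ** ?P (j + Suc m))"
  proof -
    have "trace (?P j ** ((- A) ** ?P (Suc m))) = trace (((- A) ** ?P (Suc m)) ** ?P j)"
      by (rule trace_mul_sym)
    also have "\<dots> = trace ((- A) ** ?P (Suc m + j))"
      by (simp add: matrix_mul_assoc[symmetric] matrix_pow_add)
    finally show ?thesis by (simp add: trace_mult_neg add.commute)
  qed
  also have "trace (?P j ** (?X ** Dm H A (Suc m) t)) = trace (?P (Suc j) ** Dm H A (Suc m) t)"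
    by (simp only: matrix_mul_assoc matrix_pow_Suc')
  also have "\<dots> = - of_nat (Suc m) * trace (A ** ?P (j + Suc m))"
    by (simp only: Suc.IH add_Suc add_Suc_right)
  also have "- trace (A ** ?P (j + Suc m)) + - of_nat (Suc m) * trace (A ** ?P (j + Suc m))
      = - of_nat (Suc (Suc m)) * trace (A ** ?P (j + Suc m))"
    by (simp only: of_nat_Suc ring_helper)
  finally show ?case .
qed

definition fS :: "complex^'n^'n \<Rightarrow> complex^'n^'n \<Rightarrow> nat \<Rightarrow> real \<Rightarrow> real" where
  "fS H A n t = Re (trace (matrix_pow (H - t *\<^sub>R A) n)) / fact n"

definition fD :: "complex^'n^'n \<Rightarrow> complex^'n^'n \<Rightarrow> nat \<Rightarrow> real \<Rightarrow> real" where
  "fD H A n t = (if n = 0 then 0 else - Re (trace (A ** matrix_pow (H - t *\<^sub>R A) (n - 1))) / fact (n - 1))"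

lemma div_cancel_helper: "(k::real) \<noteq> 0 \<Longrightarrow> - (k * x) / (k * f) = - x / f"
  by simp
lemma fact_helper: "- real (Suc m) * x / fact (Suc m) = - x / fact m"
proof -
  have f: "fact (Suc m) = real (Suc m) * fact m" by (simp only: fact_Suc of_nat_id)
  have "- real (Suc m) * x / fact (Suc m) = - (real (Suc m) * x) / (real (Suc m) * fact m)"
    by (simp only: f minus_mult_left)
  also have "\<dots> = - x / fact m" by (rule div_cancel_helper) simp
  finally show ?thesis .
qed

lemma fS_deriv: "(fS H A n has_field_derivative fD H A n t) (at t)"
proof -
  have "((\<lambda>t. Re (trace (matrix_pow (H - t *\<^sub>R A) n))) has_vector_derivative Re (trace (Dm H A n t))) (at t)"
    by (rule bounded_linear.has_vector_derivative[OF bl_Re_trace deriv_pow])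
  then have d: "((\<lambda>t. Re (trace (matrix_pow (H - t *\<^sub>R A) n))) has_field_derivative Re (trace (Dm H A n t))) (at t)"
    by (simp add: has_real_derivative_iff_has_vector_derivative)
  have "((\<lambda>t. Re (trace (matrix_pow (H - t *\<^sub>R A) n)) / fact n) has_field_derivative Re (trace (Dm H A n t)) / fact n) (at t)"
    by (rule DERIV_cdivide[OF d])
  moreover have "Re (trace (Dm H A n t)) / fact n = fD H A n t"
  proof (cases n)
    case 0 then show ?thesis by (simp add: fD_def trace_def)
  next
    case (Suc m)
    have "trace (matrix_pow (H - t *\<^sub>R A) 0 ** Dm H A (Suc m) t) = - of_nat (Suc m) * trace (A ** matrix_pow (H - t *\<^sub>R A) (0 + m))"
      by (rule trace_D)
    then have "trace (Dm H A (Suc m) t) = - of_nat (Suc m) * trace (A ** matrix_pow (H - t *\<^sub>R A) m)"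
      by (simp only: matrix_pow.simps(1) matrix_mul_lid add_0)
    then have "Re (trace (Dm H A (Suc m) t)) = Re (- of_nat (Suc m) * trace (A ** matrix_pow (H - t *\<^sub>R A) m))"
      by (simp only:)
    also have "\<dots> = - real (Suc m) * Re (trace (A ** matrix_pow (H - t *\<^sub>R A) m))"
      by simp
    finally have eq: "Re (trace (Dm H A (Suc m) t)) = - real (Suc m) * Re (trace (A ** matrix_pow (H - t *\<^sub>R A) m))" .
    have "Re (trace (Dm H A (Suc m) t)) / fact (Suc m) = - Re (trace (A ** matrix_pow (H - t *\<^sub>R A) m)) / fact m"
      by (simp only: eq fact_helper)
    then show ?thesis using Suc by (simp del: Dm.simps add: fD_def)
  qed
  ultimately show ?thesis unfolding fS_def[abs_def] by simp
qed

lemma fS_sums: "(\<lambda>n. fS H A n t) sums Re (trace (mexp (H - t *\<^sub>R A)))"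
proof -
  have "(\<lambda>n. Re (trace ((1 / fact n) *\<^sub>R matrix_pow (H - t *\<^sub>R A) n))) sums Re (trace (mexp (H - t *\<^sub>R A)))"
    by (rule bounded_linear.sums[OF bl_Re_trace mexp_sums])
  moreover have "Re (trace ((1 / fact n) *\<^sub>R matrix_pow (H - t *\<^sub>R A) n)) = fS H A n t" for n
    using linear.scaleR[OF bounded_linear.linear[OF bl_Re_trace], of "1 / fact n" "matrix_pow (H - t *\<^sub>R A) n"]
    by (simp add: fS_def)
  ultimately show ?thesis by simp
qed

lemma fD_sums: "(\<lambda>n. fD H A n t) sums (- Re (trace (A ** mexp (H - t *\<^sub>R A))))"
proof -
  have "(\<lambda>n. Re (trace (A ** ((1 / fact n) *\<^sub>R matrix_pow (H - t *\<^sub>R A) n)))) sums Re (trace (A ** mexp (H - t *\<^sub>R A)))"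
    by (rule bounded_linear.sums[OF bl_Re_trace_mult mexp_sums])
  moreover have "Re (trace (A ** ((1 / fact n) *\<^sub>R matrix_pow (H - t *\<^sub>R A) n))) = - fD H A (Suc n) t" for n
    using linear.scaleR[OF bounded_linear.linear[OF bl_Re_trace_mult[of A]], of "1 / fact n" "matrix_pow (H - t *\<^sub>R A) n"]
    by (simp add: fD_def)
  ultimately have "(\<lambda>n. - fD H A (Suc n) t) sums Re (trace (A ** mexp (H - t *\<^sub>R A)))" by simp
  then have "(\<lambda>n. fD H A (Suc n) t) sums (- Re (trace (A ** mexp (H - t *\<^sub>R A))))"
    using sums_minus by fastforce
  then have "(\<lambda>n. fD H A n t) sums (- Re (trace (A ** mexp (H - t *\<^sub>R A))) + fD H A 0 t)"
    by (rule sums_Suc_iff[of "\<lambda>n. fD H A n t", THEN iffD1])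
  then show ?thesis by (simp add: fD_def)
qed

lemma L1_X_le: "\<bar>t\<bar> \<le> 2 \<Longrightarrow> L1 (H - t *\<^sub>R A) \<le> L1 H + 2 * L1 A"
proof -
  assume t: "\<bar>t\<bar> \<le> 2"
  have "L1 (H - t *\<^sub>R A) \<le> L1 H + \<bar>t\<bar> * L1 A" using L1_diff[of H "t *\<^sub>R A"] by (simp add: L1_scaleR)
  also have "\<dots> \<le> L1 H + 2 * L1 A" using t L1_nonneg[of A] by (intro add_left_mono mult_right_mono) auto
  finally show ?thesis .
qed

lemma fD_bound:
  fixes H A :: "complex^'n^'n"
  assumes "\<bar>t\<bar> \<le> 2"
  shows "norm (fD H A n t) \<le> (if n = 0 then 0 else L1 A * real CARD('n) * (L1 H + 2 * L1 A) ^ (n - 1) / fact (n - 1))"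
proof (cases n)
  case 0 then show ?thesis by (simp add: fD_def)
next
  case (Suc m)
  let ?X = "H - t *\<^sub>R A"
  have "\<bar>Re (trace (A ** matrix_pow ?X m))\<bar> \<le> L1 (A ** matrix_pow ?X m)" by (rule abs_Re_trace_le)
  also have "\<dots> \<le> L1 A * L1 (matrix_pow ?X m)" by (rule L1_mult)
  also have "\<dots> \<le> L1 A * (real CARD('n) * L1 ?X ^ m)" by (rule mult_left_mono[OF L1_pow L1_nonneg])
  also have "\<dots> \<le> L1 A * (real CARD('n) * (L1 H + 2 * L1 A) ^ m)"
    by (intro mult_left_mono L1_nonneg power_mono L1_X_le assms) auto
  finally have "\<bar>Re (trace (A ** matrix_pow ?X m))\<bar> / fact m \<le> L1 A * (real CARD('n) * (L1 H + 2 * L1 A) ^ m) / fact m"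
    by (intro divide_right_mono) auto
  then show ?thesis using Suc by (simp add: fD_def mult.assoc)
qed

lemma summable_fD_bound:
  fixes H A :: "complex^'n^'n"
  shows  "summable (\<lambda>n. if n = 0 then 0 else L1 A * real CARD('n) * (L1 H + 2 * L1 A) ^ (n - 1) / fact (n - 1))"
proof -
  have "summable (\<lambda>m. (L1 A * real CARD('n)) * (L1 H + 2 * L1 A) ^ m / fact m)"
    by (rule summable_exp_bound)
  then show ?thesis by (subst summable_Suc_iff[symmetric]) simp
qed

lemma trace_mexp_line_deriv:
  assumes "t \<in> {-1<..<2}"
  shows "((\<lambda>t. Re (trace (mexp (H - t *\<^sub>R A)))) has_field_derivative (- Re (trace (A ** mexp (H - t *\<^sub>R (A::complex^'n^'n)))))) (at t)"
proof -
  let ?S = "{-1<..<2::real}"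
  have "uniform_limit ?S (\<lambda>n x. \<Sum>i<n. fD H A i x) (\<lambda>x. suminf (\<lambda>i. fD H A i x)) sequentially"
  proof (rule Weierstrass_m_test[OF _ summable_fD_bound])
    fix n x assume "x \<in> ?S"
    then have "\<bar>x\<bar> \<le> 2" by auto
    then show "norm (fD H A n x) \<le> (if n = 0 then 0 else L1 A * real CARD('n) * (L1 H + 2 * L1 A) ^ (n - 1) / fact (n - 1))"
      by (rule fD_bound)
  qed
  then have u: "uniformly_convergent_on ?S (\<lambda>n x. \<Sum>i<n. fD H A i x)"
    unfolding uniformly_convergent_on_def by blast
  have "((\<lambda>x. \<Sum>n. fS H A n x) has_field_derivative (\<Sum>n. fD H A n t)) (at t)"
  proof (rule has_field_derivative_series'(2)[OF _ _ u])
    show "convex ?S" by (rule convex_real_interval)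
    show "\<And>n x. x \<in> ?S \<Longrightarrow> (fS H A n has_field_derivative fD H A n x) (at x within ?S)"
      using fS_deriv has_field_derivative_at_within by blast
    show "(0::real) \<in> ?S" by simp
    show "summable (\<lambda>n. fS H A n 0)" using fS_sums sums_summable by blast
    show "t \<in> interior ?S" using assms by (simp add: interior_open)
  qed
  moreover have "(\<lambda>x. \<Sum>n. fS H A n x) = (\<lambda>t. Re (trace (mexp (H - t *\<^sub>R A))))"
  proof (rule ext)
    fix x show "(\<Sum>n. fS H A n x) = Re (trace (mexp (H - x *\<^sub>R A)))"
      using fS_sums[of H A x] by (rule sums_unique[symmetric])
  qed
  moreover have "(\<Sum>n. fD H A n t) = - Re (trace (A ** mexp (H - t *\<^sub>R A)))"
    using fD_sums[of H A t] by (rule sums_unique[symmetric])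
  ultimately show ?thesis by simp
qed

theorem trace_mexp_mono:
  assumes H: "hermitian H" and A: "psd A"
  shows "Re (trace (mexp (H - A))) \<le> Re (trace (mexp (H::complex^'n^'n)))"
proof -
  let ?phi = "\<lambda>t. Re (trace (mexp (H - t *\<^sub>R A)))"
  have hA: "hermitian A" using A unfolding psd_def by blast
  have D: "(?phi has_field_derivative (- Re (trace (A ** mexp (H - t *\<^sub>R A))))) (at t)"
    if "0 \<le> t" "t \<le> 1" for t
    using that by (intro trace_mexp_line_deriv) auto
  have "?phi 1 \<le> ?phi 0"
  proof (rule DERIV_nonpos_imp_decreasing_open[of 0 1])
    fix x :: real assume x: "0 < x" "x < 1"
    have "0 \<le> Re (trace (A ** mexp (H - x *\<^sub>R A)))"
      by (intro psd_trace_mexp_nonneg A hermitian_diff H hermitian_scaleR hA)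
    then show "\<exists>y. (?phi has_real_derivative y) (at x) \<and> y \<le> 0"
      using D[of x] x by auto
  next
    show "continuous_on {0..1} ?phi"
      using D by (intro continuous_at_imp_continuous_on ballI DERIV_isCont) auto
  qed simp
  then show ?thesis by simp
qed

lemma qform_add: "(\<Sum>i\<in>UNIV. \<Sum>j\<in>UNIV. cnj (x $ i) * (A + B) $ i $ j * x $ j)
  = (\<Sum>i\<in>UNIV. \<Sum>j\<in>UNIV. cnj (x $ i) * A $ i $ j * x $ j) + (\<Sum>i\<in>UNIV. \<Sum>j\<in>UNIV. cnj (x $ i) * B $ i $ j * x $ j)"
  by (simp add: algebra_simps sum.distrib)

lemma qform_scaleR: "(\<Sum>i\<in>UNIV. \<Sum>j\<in>UNIV. cnj (x $ i) * (r *\<^sub>R A) $ i $ j * x $ j)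
  = r *\<^sub>R (\<Sum>i\<in>UNIV. \<Sum>j\<in>UNIV. cnj (x $ i) * A $ i $ j * x $ j)"
  by (simp add: scaleR_sum_right)

lemma psd_add: assumes "psd A" "psd B" shows "psd (A + B)"
  unfolding psd_def
proof (intro conjI allI)
  show "hermitian (A + B)" using assms unfolding psd_def by (blast intro: hermitian_add)
  fix x :: "complex^'a"
  have "Re (\<Sum>i\<in>UNIV. \<Sum>j\<in>UNIV. cnj (x $ i) * (A + B) $ i $ j * x $ j)
    = Re (\<Sum>i\<in>UNIV. \<Sum>j\<in>UNIV. cnj (x $ i) * A $ i $ j * x $ j) + Re (\<Sum>i\<in>UNIV. \<Sum>j\<in>UNIV. cnj (x $ i) * B $ i $ j * x $ j)"
    by (simp only: qform_add plus_complex.sel)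
  moreover have "0 \<le> Re (\<Sum>i\<in>UNIV. \<Sum>j\<in>UNIV. cnj (x $ i) * A $ i $ j * x $ j)"
    using assms(1) unfolding psd_def by blast
  moreover have "0 \<le> Re (\<Sum>i\<in>UNIV. \<Sum>j\<in>UNIV. cnj (x $ i) * B $ i $ j * x $ j)"
    using assms(2) unfolding psd_def by blast
  ultimately show "0 \<le> Re (\<Sum>i\<in>UNIV. \<Sum>j\<in>UNIV. cnj (x $ i) * (A + B) $ i $ j * x $ j)"
    by linarith
qed

lemma psd_scaleR: assumes "psd A" "0 \<le> r" shows "psd (r *\<^sub>R A)"
  unfolding psd_def
proof (intro conjI allI)
  show "hermitian (r *\<^sub>R A)" using assms unfolding psd_def by (blast intro: hermitian_scaleR)
  fix x :: "complex^'a"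
  have "Re (\<Sum>i\<in>UNIV. \<Sum>j\<in>UNIV. cnj (x $ i) * (r *\<^sub>R A) $ i $ j * x $ j)
    = r * Re (\<Sum>i\<in>UNIV. \<Sum>j\<in>UNIV. cnj (x $ i) * A $ i $ j * x $ j)"
    by (simp only: qform_scaleR scaleR_complex.sel)
  moreover have "0 \<le> Re (\<Sum>i\<in>UNIV. \<Sum>j\<in>UNIV. cnj (x $ i) * A $ i $ j * x $ j)"
    using assms(1) unfolding psd_def by blast
  ultimately show "0 \<le> Re (\<Sum>i\<in>UNIV. \<Sum>j\<in>UNIV. cnj (x $ i) * (r *\<^sub>R A) $ i $ j * x $ j)"
    using assms(2) by simp
qed

lemma psd_zero: "psd (0::complex^'n^'n)"
  unfolding psd_def hermitian_def by simp

lemma psd_sum: "(\<And>i. i \<in> S \<Longrightarrow> psd (f i)) \<Longrightarrow> psd (sum f S)"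
  by (induction S rule: infinite_finite_induct) (auto simp: psd_zero psd_add)

definition FF :: "(nat \<Rightarrow> complex^'d^'d) \<Rightarrow> nat \<Rightarrow> real \<Rightarrow> complex^'d^'d \<Rightarrow> (nat \<Rightarrow> nat) \<Rightarrow> real" where
  "FF A n \<theta> E c = Re (trace (mexp ((- \<theta>) *\<^sub>R ((\<Sum>i<n. of_nat (c i) *\<^sub>R A i) - E))))"

lemma hermitian_FF_arg:
  assumes "\<And>i. i < n \<Longrightarrow> psd (A i)" "hermitian E"
  shows "hermitian ((- \<theta>) *\<^sub>R ((\<Sum>i<n. of_nat (c i) *\<^sub>R A i) - E))"
  using assms unfolding psd_def
  by (intro hermitian_scaleR hermitian_diff hermitian_sum) auto

lemma FF_nonneg:
  assumes "\<And>i. i < n \<Longrightarrow> psd (A i)" "hermitian E"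
  shows "0 \<le> FF A n \<theta> E c"
  unfolding FF_def by (rule trace_mexp_nonneg[OF hermitian_FF_arg[OF assms]])

lemma FF_mono:
  assumes psdA: "\<And>i. i < n \<Longrightarrow> psd (A i)" and E: "hermitian E" and th: "0 \<le> \<theta>"
    and le: "\<And>i. i < n \<Longrightarrow> c i \<le> c' i"
  shows "FF A n \<theta> E c' \<le> FF A n \<theta> E c"
proof -
  let ?S = "\<lambda>c. (\<Sum>i<n. of_nat (c i) *\<^sub>R A i)"
  let ?H = "(- \<theta>) *\<^sub>R (?S c - E)"
  let ?B = "\<theta> *\<^sub>R (\<Sum>i<n. (real (c' i) - real (c i)) *\<^sub>R A i)"
  have diff: "?S c' - ?S c = (\<Sum>i<n. (real (c' i) - real (c i)) *\<^sub>R A i)"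
    by (simp add: sum_subtractf[symmetric] scaleR_diff_left)
  have eq: "(- \<theta>) *\<^sub>R (?S c' - E) = ?H - ?B"
  proof -
    have "(- \<theta>) *\<^sub>R (?S c' - E) = (- \<theta>) *\<^sub>R (?S c - E) - \<theta> *\<^sub>R (?S c' - ?S c)"
      by (simp add: algebra_simps)
    then show ?thesis by (simp only: diff)
  qed
  have "psd ?B"
    using psdA le th by (intro psd_scaleR psd_sum) auto
  then have "Re (trace (mexp (?H - ?B))) \<le> Re (trace (mexp ?H))"
    by (intro trace_mexp_mono hermitian_FF_arg psdA E)
  then show ?thesis unfolding FF_def by (simp only: eq)
qed

lemma exp_ineq_aux: "(1 - 2 * u) * exp (2 * u) \<le> (1::real)"
proof -
  have "1 - 2 * u \<le> exp (- (2 * u))" using exp_ge_add_one_self[of "- (2 * u)"] by simp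
  then have "(1 - 2 * u) * exp (2 * u) \<le> exp (- (2 * u)) * exp (2 * u)"
    by (intro mult_right_mono) auto
  also have "\<dots> = 1" by (simp add: exp_minus field_simps)
  finally show ?thesis .
qed

lemma exp_ineq:
  assumes "0 \<le> u"
  shows "(1 - u) * exp (2 * u) \<le> 1 + (u::real)"
proof -
  let ?psi = "\<lambda>u::real. (1 + u) - (1 - u) * exp (2 * u)"
  have D: "(?psi has_real_derivative (1 - (1 - 2 * x) * exp (2 * x))) (at x)" for x
    by (auto intro!: derivative_eq_intros simp: algebra_simps)
  have "?psi 0 \<le> ?psi u"
  proof (rule DERIV_nonneg_imp_increasing_open[OF assms])
    fix x :: real
    show "\<exists>y. (?psi has_real_derivative y) (at x) \<and> 0 \<le> y"
      using D[of x] exp_ineq_aux[of x] by auto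
  next
    show "continuous_on {0..u} ?psi" by (intro continuous_intros)
  qed
  then show ?thesis by simp
qed

definition Gk :: "nat \<Rightarrow> real \<Rightarrow> real" where
  "Gk k x = exp (- x) * (\<Sum>j\<le>k. x ^ j / fact j)"

lemma Gk_deriv: "(Gk k has_real_derivative (- exp (- x) * x ^ k / fact k)) (at x)"
proof (induction k)
  case 0
  show ?case unfolding Gk_def[abs_def] by (auto intro!: derivative_eq_intros)
next
  case (Suc k)
  have e: "Gk (Suc k) = (\<lambda>x. Gk k x + exp (- x) * (x ^ Suc k / fact (Suc k)))"
    by (simp add: Gk_def[abs_def] algebra_simps)
  have p: "((\<lambda>x. x ^ Suc k / fact (Suc k)) has_real_derivative x ^ k / fact k) (at x)"
  proof -
    have "((\<lambda>x. x ^ Suc k / fact (Suc k)) has_real_derivative real (Suc k) * x ^ (Suc k - Suc 0) / fact (Suc k)) (at x)"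
      by (rule DERIV_cdivide[OF DERIV_pow])
    moreover have "real (Suc k) * x ^ (Suc k - Suc 0) / fact (Suc k) = x ^ k / fact k"
      by (simp only: fact_Suc of_nat_id diff_Suc_Suc minus_nat.diff_0) (simp del: of_nat_Suc)
    ultimately show ?thesis by simp
  qed
  have ex: "((\<lambda>x. exp (- x)) has_real_derivative - exp (- x)) (at x)"
    by (auto intro!: derivative_eq_intros)
  from DERIV_add[OF Suc DERIV_mult[OF ex p]] show ?case unfolding e
    by (simp add: algebra_simps)
qed

lemma sum_zero_pow: "(\<Sum>j\<le>k. (0::real) ^ j / fact j) = 1"
  by (induction k) simp_all

lemma Gk_zero: "Gk k 0 = 1"
  unfolding Gk_def by (simp only: sum_zero_pow) simp

lemma Gk_nonneg: "0 \<le> x \<Longrightarrow> 0 \<le> Gk k x"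
  unfolding Gk_def by (intro mult_nonneg_nonneg sum_nonneg) auto

lemma pointwise_ineq:
  assumes k: "k > 0" and s: "0 \<le> s" "s \<le> real k"
  shows "exp (- (real k - s)) * (real k - s) ^ k \<le> exp (- (real k + s)) * (real k + s) ^ k"
proof -
  let ?K = "real k"
  let ?u = "s / ?K"
  have Kpos: "?K > 0" using k by simp
  have u: "0 \<le> ?u" using s Kpos by simp
  have "(1 - ?u) * exp (2 * ?u) \<le> 1 + ?u" by (rule exp_ineq[OF u])
  then have ineq: "?K * ((1 - ?u) * exp (2 * ?u)) \<le> ?K * (1 + ?u)"
    using Kpos by (intro mult_left_mono) auto
  have eq1: "?K * ((1 - ?u) * exp (2 * ?u)) = (?K - s) * exp (2 * s / ?K)"
    using Kpos by (simp add: field_simps)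
  have eq2: "?K * (1 + ?u) = ?K + s"
    using Kpos by (simp add: field_simps)
  from ineq have base: "(?K - s) * exp (2 * s / ?K) \<le> ?K + s" by (simp only: eq1 eq2)
  have nn: "0 \<le> (?K - s) * exp (2 * s / ?K)" using s by simp
  have "((?K - s) * exp (2 * s / ?K)) ^ k \<le> (?K + s) ^ k"
    by (rule power_mono[OF base nn])
  moreover have "exp (2 * s / ?K) ^ k = exp (2 * s)"
    using Kpos by (simp add: exp_of_nat_mult[symmetric])
  ultimately have "(?K - s) ^ k * exp (2 * s) \<le> (?K + s) ^ k"
    by (simp add: power_mult_distrib)
  then have ineq2: "exp (- (?K + s)) * ((?K - s) ^ k * exp (2 * s)) \<le> exp (- (?K + s)) * (?K + s) ^ k"
    by (intro mult_left_mono) auto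
  have eq: "exp (- (?K + s)) * ((?K - s) ^ k * exp (2 * s)) = exp (- (?K - s)) * (?K - s) ^ k"
  proof -
    have "exp (- (?K + s)) * exp (2 * s) = exp (- (?K - s))"
      by (subst exp_add[symmetric]) (simp add: algebra_simps)
    then show ?thesis by (metis mult.commute mult.left_commute)
  qed
  show ?thesis using ineq2 unfolding eq .
qed

lemma Gk_half: assumes "k > 0" shows "1/2 \<le> Gk k (real k)"
proof -
  let ?K = "real k"
  let ?D = "\<lambda>s. Gk k (?K - s) + Gk k (?K + s)"
  have D: "(?D has_real_derivative (exp (- (?K - s)) * (?K - s) ^ k / fact k - exp (- (?K + s)) * (?K + s) ^ k / fact k)) (at s)" for s
  proof -
    have "((\<lambda>s. Gk k (?K - s)) has_real_derivative (- exp (- (?K - s)) * (?K - s) ^ k / fact k) * (- 1)) (at s)"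
      by (rule DERIV_chain2[OF Gk_deriv]) (auto intro!: derivative_eq_intros)
    moreover have "((\<lambda>s. Gk k (?K + s)) has_real_derivative (- exp (- (?K + s)) * (?K + s) ^ k / fact k) * 1) (at s)"
      by (rule DERIV_chain2[OF Gk_deriv]) (auto intro!: derivative_eq_intros)
    ultimately have "(?D has_real_derivative (- exp (- (?K - s)) * (?K - s) ^ k / fact k) * (- 1) + (- exp (- (?K + s)) * (?K + s) ^ k / fact k) * 1) (at s)"
      by (rule DERIV_add)
    moreover have "(- exp (- (?K - s)) * (?K - s) ^ k / fact k) * (- 1) + (- exp (- (?K + s)) * (?K + s) ^ k / fact k) * 1
       = exp (- (?K - s)) * (?K - s) ^ k / fact k - exp (- (?K + s)) * (?K + s) ^ k / fact k"
      by simp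
    ultimately show ?thesis by simp
  qed
  have "?D ?K \<le> ?D 0"
  proof (rule DERIV_nonpos_imp_decreasing_open[of 0 ?K ?D])
    show "0 \<le> ?K" by simp
    fix x assume x: "0 < x" "x < ?K"
    have "exp (- (?K - x)) * (?K - x) ^ k / fact k \<le> exp (- (?K + x)) * (?K + x) ^ k / fact k"
      using pointwise_ineq[OF assms, of x] x by (intro divide_right_mono) auto
    then show "\<exists>y. (?D has_real_derivative y) (at x) \<and> y \<le> 0" using D[of x] by auto
  next
    show "continuous_on {0..?K} ?D"
      using D by (intro continuous_at_imp_continuous_on ballI DERIV_isCont) auto
  qed
  then have "Gk k 0 + Gk k (?K + ?K) \<le> Gk k ?K + Gk k ?K" by simp
  then show ?thesis using Gk_zero[of k] Gk_nonneg[of "?K + ?K" k] by linarith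
qed

definition bump :: "(nat \<Rightarrow> nat) \<Rightarrow> nat \<Rightarrow> nat \<Rightarrow> nat" where
  "bump c y = c(y := Suc (c y))"

lemma balls_Suc:
  "balls_in_bins (Suc m) n = bind_pmf (pmf_of_set {..<n}) (\<lambda>y. map_pmf (\<lambda>f. f(m := y)) (balls_in_bins m n))"
  unfolding balls_in_bins_def lessThan_Suc
  by (subst Pi_pmf_insert') (auto simp: map_pmf_def)

lemma occupancy_Suc_upd: "occupancy (Suc m) (f(m := y)) = bump (occupancy m f) y"
proof (rule ext)
  fix i
  show "occupancy (Suc m) (f(m := y)) i = bump (occupancy m f) y i"
  proof (cases "y = i")
    case True
    have "{j \<in> {..<Suc m}. (f(m := y)) j = i} = insert m {j \<in> {..<m}. f j = i}"
      using True by auto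
    then show ?thesis using True by (simp add: occupancy_def bump_def)
  next
    case False
    have "{j \<in> {..<Suc m}. (f(m := y)) j = i} = {j \<in> {..<m}. f j = i}"
      using False by auto
    then show ?thesis using False by (simp add: occupancy_def bump_def)
  qed
qed

lemma OD_Suc:
  "map_pmf (occupancy (Suc m)) (balls_in_bins (Suc m) n)
     = bind_pmf (pmf_of_set {..<n}) (\<lambda>y. map_pmf (\<lambda>c. bump c y) (map_pmf (occupancy m) (balls_in_bins m n)))"
  unfolding balls_Suc map_bind_pmf map_pmf_comp occupancy_Suc_upd ..

lemma inj_bump: "inj (\<lambda>c. bump c y)"
proof (rule injI)
  fix c c' assume "bump c y = bump c' y"
  then have "\<forall>i. bump c y i = bump c' y i" by simp
  then show "c = c'" unfolding bump_def by (auto simp: fun_eq_iff split: if_splits)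
qed

lemma pmf_bump:
  "pmf (map_pmf (\<lambda>c. bump c y) D) c = (if c y > 0 then pmf D (c(y := c y - 1)) else 0)"
proof (cases "c y > 0")
  case True
  then have "c = bump (c(y := c y - 1)) y" unfolding bump_def by (auto simp: fun_eq_iff)
  then have "pmf (map_pmf (\<lambda>c. bump c y) D) c = pmf (map_pmf (\<lambda>c. bump c y) D) (bump (c(y := c y - 1)) y)"
    by simp
  also have "\<dots> = pmf D (c(y := c y - 1))" by (rule pmf_map_inj'[OF inj_bump])
  finally show ?thesis using True by simp
next
  case False
  then have "c \<notin> (\<lambda>c. bump c y) ` set_pmf D" unfolding bump_def by auto
  then show ?thesis using False by (simp add: pmf_map_outside)
qed

definition mval :: "nat \<Rightarrow> nat \<Rightarrow> (nat \<Rightarrow> nat) \<Rightarrow> real" where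
  "mval n m c = (if (\<forall>i\<ge>n. c i = 0) \<and> (\<Sum>i<n. c i) = m then fact m / (\<Prod>i<n. fact (c i)) / real n ^ m else 0)"

lemma sum_upd_dec:
  fixes c :: "nat \<Rightarrow> nat" and n y :: nat
  assumes "y < n" "c y > 0"
  shows "(\<Sum>i<n. (c(y := c y - 1)) i) = (\<Sum>i<n. c i) - 1" and "(\<Sum>i<n. c i) \<ge> 1"
proof -
  have y: "y \<in> {..<n}" using assms by simp
  have a: "(\<Sum>i<n. c i) = c y + (\<Sum>i\<in>{..<n} - {y}. c i)"
    by (rule sum.remove) (use y in auto)
  have b: "(\<Sum>i<n. (c(y := c y - 1)) i) = (c y - 1) + (\<Sum>i\<in>{..<n} - {y}. (c(y := c y - 1)) i)"
    using sum.remove[of "{..<n}" y "c(y := c y - 1)"] y by simp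
  have c: "(\<Sum>i\<in>{..<n} - {y}. (c(y := c y - 1)) i) = (\<Sum>i\<in>{..<n} - {y}. c i)"
    by (intro sum.cong) auto
  show "(\<Sum>i<n. (c(y := c y - 1)) i) = (\<Sum>i<n. c i) - 1" using a b c assms by simp
  show "(\<Sum>i<n. c i) \<ge> 1" using a assms by simp
qed

lemma prod_upd_dec:
  fixes c :: "nat \<Rightarrow> nat" and n y :: nat
  assumes "y < n" "c y > 0"
  shows "real (c y) * (\<Prod>i<n. fact ((c(y := c y - 1)) i) :: real) = (\<Prod>i<n. fact (c i))"
proof -
  have y: "y \<in> {..<n}" using assms by simp
  have a: "(\<Prod>i<n. fact (c i) :: real) = fact (c y) * (\<Prod>i\<in>{..<n} - {y}. fact (c i))"
    by (rule prod.remove) (use y in auto)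
  have b: "(\<Prod>i<n. fact ((c(y := c y - 1)) i) :: real) = fact (c y - 1) * (\<Prod>i\<in>{..<n} - {y}. fact ((c(y := c y - 1)) i))"
    using prod.remove[of "{..<n}" y "\<lambda>i. fact ((c(y := c y - 1)) i) :: real"] y by simp
  have c: "(\<Prod>i\<in>{..<n} - {y}. fact ((c(y := c y - 1)) i) :: real) = (\<Prod>i\<in>{..<n} - {y}. fact (c i))"
    by (intro prod.cong) auto
  have d: "fact (c y) = real (c y) * (fact (c y - 1) :: real)"
    using assms(2) by (metis Suc_diff_1 fact_Suc of_nat_id)
  show ?thesis using a b c d by (simp add: mult.assoc)
qed

lemma prod_fact_pos: "(\<Prod>i<n. fact (c i) :: real) > 0"
  by (intro prod_pos) auto

lemma mval_step:
  fixes c :: "nat \<Rightarrow> nat" and n y :: nat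
  assumes n: "y < n"
  shows "(if c y > 0 then mval n m (c(y := c y - 1)) else 0)
        = (if (\<forall>i\<ge>n. c i = 0) \<and> (\<Sum>i<n. c i) = Suc m then fact m * real (c y) / (\<Prod>i<n. fact (c i)) / real n ^ m else 0)"
proof (cases "c y > 0")
  case False then show ?thesis by simp
next
  case True
  let ?c' = "c(y := c y - 1)"
  have s: "(\<Sum>i<n. ?c' i) = (\<Sum>i<n. c i) - 1" "(\<Sum>i<n. c i) \<ge> 1"
    using sum_upd_dec[where c=c and n=n and y=y, OF n True] by auto
  have out: "(\<forall>i\<ge>n. ?c' i = 0) \<longleftrightarrow> (\<forall>i\<ge>n. c i = 0)" using n by auto
  have cond: "((\<forall>i\<ge>n. ?c' i = 0) \<and> (\<Sum>i<n. ?c' i) = m) \<longleftrightarrow> ((\<forall>i\<ge>n. c i = 0) \<and> (\<Sum>i<n. c i) = Suc m)"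
    using s out by auto
  have p: "real (c y) * (\<Prod>i<n. fact (?c' i) :: real) = (\<Prod>i<n. fact (c i))"
    by (rule prod_upd_dec[where c=c and n=n and y=y, OF n True])
  have pos: "(\<Prod>i<n. fact (?c' i) :: real) > 0" by (rule prod_fact_pos)
  have cy: "real (c y) > 0" using True by simp
  have v: "fact m / (\<Prod>i<n. fact (?c' i)) = fact m * real (c y) / (\<Prod>i<n. fact (c i) :: real)"
    unfolding p[symmetric] using pos cy by (simp add: field_simps)
  show ?thesis using True unfolding mval_def cond v by simp
qed

lemma pmf_OD:
  assumes n: "n > 0"
  shows "pmf (map_pmf (occupancy m) (balls_in_bins m n)) c = mval n m c"
proof (induction m arbitrary: c)
  case 0
  have occ0: "occupancy 0 = (\<lambda>f i. 0)" by (auto simp: occupancy_def fun_eq_iff)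
  have "map_pmf (occupancy 0) (balls_in_bins 0 n) = return_pmf (\<lambda>i. 0)"
    unfolding balls_in_bins_def occ0 by simp
  moreover have "((\<forall>i\<ge>n. c i = 0) \<and> (\<Sum>i<n. c i) = 0) \<longleftrightarrow> c = (\<lambda>i. 0)"
    by (auto simp: fun_eq_iff) (metis lessThan_iff not_le)
  ultimately show ?case by (auto simp: mval_def pmf_return indicator_def)
next
  case (Suc m)
  have ne: "{..<n} \<noteq> {}" using n by auto
  have "pmf (map_pmf (occupancy (Suc m)) (balls_in_bins (Suc m) n)) c
      = (\<Sum>y<n. pmf (map_pmf (\<lambda>c. bump c y) (map_pmf (occupancy m) (balls_in_bins m n))) c) / real n"
    unfolding OD_Suc by (subst pmf_bind_pmf_of_set[OF ne]) auto
  also have "\<dots> = (\<Sum>y<n. if c y > 0 then mval n m (c(y := c y - 1)) else 0) / real n"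
    by (simp only: pmf_bump Suc.IH)
  also have "\<dots> = (\<Sum>y<n. if (\<forall>i\<ge>n. c i = 0) \<and> (\<Sum>i<n. c i) = Suc m then fact m * real (c y) / (\<Prod>i<n. fact (c i)) / real n ^ m else 0) / real n"
    by (rule arg_cong[where f="\<lambda>x. x / real n"], rule sum.cong, rule refl, rule mval_step, simp)
  also have "\<dots> = mval n (Suc m) c"
  proof (cases "(\<forall>i\<ge>n. c i = 0) \<and> (\<Sum>i<n. c i) = Suc m")
    case True
    have "(\<Sum>y<n. fact m * real (c y) / (\<Prod>i<n. fact (c i)) / real n ^ m)
        = fact m * real (\<Sum>y<n. c y) / (\<Prod>i<n. fact (c i)) / real n ^ m"
      by (simp add: sum_divide_distrib sum_distrib_left)
    also have "\<dots> = fact m * real (Suc m) / (\<Prod>i<n. fact (c i)) / real n ^ m"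
      using True by simp
    finally show ?thesis using True n by (simp add: mval_def fact_Suc field_simps)
  next
    case False
    have "mval n (Suc m) c = 0" by (simp only: mval_def if_not_P[OF False])
    moreover have "(\<Sum>y<n. if (\<forall>i\<ge>n. c i = 0) \<and> (\<Sum>i<n. c i) = Suc m then fact m * real (c y) / (\<Prod>i<n. fact (c i)) / real n ^ m else (0::real)) = 0"
      by (simp only: if_not_P[OF False] sum.neutral_const)
    ultimately show ?thesis by simp
  qed
  finally show ?case .
qed

lemma poissonization:
  assumes n: "n > 0" and L: "L > 0"
  shows "Pi_pmf {..<n} 0 (\<lambda>_. poisson_pmf L)
       = bind_pmf (poisson_pmf (real n * L)) (\<lambda>m. map_pmf (occupancy m) (balls_in_bins m n))"
proof (rule pmf_eqI)
  fix c :: "nat \<Rightarrow> nat"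
  let ?s = "\<Sum>i<n. c i"
  let ?P = "\<Prod>i<n. fact (c i) :: real"
  have nL: "real n * L > 0" using n L by simp
  have "pmf (bind_pmf (poisson_pmf (real n * L)) (\<lambda>m. map_pmf (occupancy m) (balls_in_bins m n))) c
      = (\<integral>m. mval n m c \<partial>measure_pmf (poisson_pmf (real n * L)))"
    by (simp add: pmf_bind pmf_OD[OF n])
  also have "\<dots> = (\<Sum>m\<in>{?s}. mval n m c * pmf (poisson_pmf (real n * L)) m)"
    by (rule integral_measure_pmf_real) (auto simp: mval_def split: if_splits)
  also have "\<dots> = mval n ?s c * ((real n * L) ^ ?s / fact ?s * exp (- (real n * L)))"
    using nL by simp
  also have "\<dots> = pmf (Pi_pmf {..<n} 0 (\<lambda>_. poisson_pmf L)) c"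
  proof (cases "\<forall>i\<ge>n. c i = 0")
    case True
    have "pmf (Pi_pmf {..<n} 0 (\<lambda>_. poisson_pmf L)) c = (\<Prod>i<n. L ^ c i / fact (c i) * exp (- L))"
      using True L by (subst pmf_Pi) auto
    also have "\<dots> = (\<Prod>i<n. L ^ c i) / ?P * (\<Prod>i<n. exp (- L))"
      by (simp add: prod.distrib prod_dividef)
    also have "\<dots> = L ^ ?s / ?P * exp (- (real n * L))"
      by (simp add: power_sum exp_of_nat_mult[symmetric])
    finally have lhs: "pmf (Pi_pmf {..<n} 0 (\<lambda>_. poisson_pmf L)) c = L ^ ?s / ?P * exp (- (real n * L))" .
    have "mval n ?s c = fact ?s / ?P / real n ^ ?s" using True by (simp add: mval_def)
    then have "mval n ?s c * ((real n * L) ^ ?s / fact ?s * exp (- (real n * L)))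
        = fact ?s / ?P / real n ^ ?s * ((real n * L) ^ ?s / fact ?s * exp (- (real n * L)))" by simp
    also have "\<dots> = L ^ ?s / ?P * exp (- (real n * L))"
      using n by (simp add: power_mult_distrib field_simps)
    finally show ?thesis using lhs by simp
  next
    case False
    then show ?thesis by (auto simp: mval_def pmf_Pi)
  qed
  finally show "pmf (Pi_pmf {..<n} 0 (\<lambda>_. poisson_pmf L)) c
      = pmf (bind_pmf (poisson_pmf (real n * L)) (\<lambda>m. map_pmf (occupancy m) (balls_in_bins m n))) c" by simp
qed

lemma FF_bump_le:
  assumes "\<And>i. i < n \<Longrightarrow> psd (A i)" "hermitian E" "0 \<le> \<theta>"
  shows "FF A n \<theta> E (bump c y) \<le> FF A n \<theta> E c"
  by (rule FF_mono[OF assms]) (auto simp: bump_def)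

lemma G_dec:
  fixes A :: "nat \<Rightarrow> complex^'d^'d"
  assumes psdA: "\<And>i. i < n \<Longrightarrow> psd (A i)" and E: "hermitian E" and th: "0 \<le> \<theta>" and n: "n > 0"
  shows "(\<integral>\<^sup>+c. ennreal (FF A n \<theta> E c) \<partial>map_pmf (occupancy (Suc m)) (balls_in_bins (Suc m) n))
       \<le> (\<integral>\<^sup>+c. ennreal (FF A n \<theta> E c) \<partial>map_pmf (occupancy m) (balls_in_bins m n))"
proof -
  let ?D = "map_pmf (occupancy m) (balls_in_bins m n)"
  let ?U = "pmf_of_set {..<n}"
  have ne: "{..<n} \<noteq> {}" using n by auto
  have "(\<integral>\<^sup>+c. ennreal (FF A n \<theta> E c) \<partial>map_pmf (occupancy (Suc m)) (balls_in_bins (Suc m) n))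
      = (\<integral>\<^sup>+y. \<integral>\<^sup>+c. ennreal (FF A n \<theta> E (bump c y)) \<partial>?D \<partial>?U)"
    unfolding OD_Suc by simp
  also have "\<dots> \<le> (\<integral>\<^sup>+y. \<integral>\<^sup>+c. ennreal (FF A n \<theta> E c) \<partial>?D \<partial>?U)"
    by (intro nn_integral_mono ennreal_leI FF_bump_le[OF psdA E th])
  also have "\<dots> = (\<integral>\<^sup>+c. ennreal (FF A n \<theta> E c) \<partial>?D)"
    by (simp add: measure_pmf.emeasure_space_1)
  finally show ?thesis .
qed

lemma G_antimono:
  fixes A :: "nat \<Rightarrow> complex^'d^'d"
  assumes psdA: "\<And>i. i < n \<Longrightarrow> psd (A i)" and E: "hermitian E" and th: "0 \<le> \<theta>" and n: "n > 0"
    and mk: "m \<le> k"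
  shows "(\<integral>\<^sup>+c. ennreal (FF A n \<theta> E c) \<partial>map_pmf (occupancy k) (balls_in_bins k n))
       \<le> (\<integral>\<^sup>+c. ennreal (FF A n \<theta> E c) \<partial>map_pmf (occupancy m) (balls_in_bins m n))"
  using mk
proof (induction k rule: dec_induct)
  case base then show ?case by simp
next
  case (step k)
  from G_dec[OF psdA E th n, where m=k] step.IH show ?case by (rule order_trans)
qed

lemma FF_le_zero:
  assumes "\<And>i. i < n \<Longrightarrow> psd (A i)" "hermitian E" "0 \<le> \<theta>"
  shows "FF A n \<theta> E c \<le> FF A n \<theta> E (\<lambda>_. 0)"
  by (rule FF_mono[OF assms]) auto

lemma FF_integrable:
  assumes "\<And>i. i < n \<Longrightarrow> psd (A i)" "hermitian E" "0 \<le> \<theta>"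
  shows "integrable (measure_pmf M) (FF A n \<theta> E)"
proof (rule measure_pmf.integrable_const_bound[where B="FF A n \<theta> E (\<lambda>_. 0)"])
  show "AE x in measure_pmf M. norm (FF A n \<theta> E x) \<le> FF A n \<theta> E (\<lambda>_. 0)"
    using FF_nonneg[OF assms(1,2)] FF_le_zero[OF assms] by simp
qed simp

lemma FF_nn_integral:
  assumes "\<And>i. i < n \<Longrightarrow> psd (A i)" "hermitian E" "0 \<le> \<theta>"
  shows "(\<integral>\<^sup>+c. ennreal (FF A n \<theta> E c) \<partial>measure_pmf M) = ennreal (measure_pmf.expectation M (FF A n \<theta> E))"
proof (rule nn_integral_eq_integral)
  show "integrable (measure_pmf M) (FF A n \<theta> E)" by (rule FF_integrable) (use assms in auto)
  show "AE c in measure_pmf M. 0 \<le> FF A n \<theta> E c" by (rule AE_I2, rule FF_nonneg) (use assms in auto)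
qed

theorem lemma9p2:
  fixes A :: "nat \<Rightarrow> complex^'d^'d" and n k :: nat and \<theta> :: real
  assumes "n > 0"
    and "\<And>i. i < n \<Longrightarrow> psd (A i)"
    and "\<theta> \<ge> 0"
  defines "EY \<equiv> (real k / real n) *\<^sub>R (\<Sum>i<n. A i)"
  shows "measure_pmf.expectation (balls_in_bins k n)
           (\<lambda>f. Re (trace (mexp ((- \<theta>) *\<^sub>R
              ((\<Sum>i<n. of_nat (occupancy k f i) *\<^sub>R A i) - EY)))))
         \<le> 2 * measure_pmf.expectation (Pi_pmf {..<n} 0 (\<lambda>_. poisson (real k / real n)))
           (\<lambda>Q. Re (trace (mexp ((- \<theta>) *\<^sub>R
              ((\<Sum>i<n. of_nat (Q i) *\<^sub>R A i) - EY)))))"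
proof -
  note n = assms(1) and psdA = assms(2) and th = assms(3)
  have E: "hermitian EY"
    unfolding EY_def using psdA unfolding psd_def by (intro hermitian_scaleR hermitian_sum) auto
  let ?F = "FF A n \<theta> EY"
  let ?OD = "\<lambda>m. map_pmf (occupancy m) (balls_in_bins m n)"
  let ?Pi = "Pi_pmf {..<n} 0 (\<lambda>_. poisson (real k / real n))"
  have lhs: "measure_pmf.expectation (balls_in_bins k n)
           (\<lambda>f. Re (trace (mexp ((- \<theta>) *\<^sub>R ((\<Sum>i<n. of_nat (occupancy k f i) *\<^sub>R A i) - EY)))))
      = measure_pmf.expectation (?OD k) ?F"
    by (simp only: integral_map_pmf) (unfold FF_def[abs_def], rule refl)
  have rhs: "measure_pmf.expectation ?Pi (\<lambda>Q. Re (trace (mexp ((- \<theta>) *\<^sub>R ((\<Sum>i<n. of_nat (Q i) *\<^sub>R A i) - EY)))))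
      = measure_pmf.expectation ?Pi ?F"
    by (unfold FF_def[abs_def], rule refl)
  have key: "measure_pmf.expectation (?OD k) ?F \<le> 2 * measure_pmf.expectation ?Pi ?F"
  proof (cases "k = 0")
    case True
    have b0: "balls_in_bins 0 n = return_pmf (\<lambda>_. 0)" unfolding balls_in_bins_def by simp
    have o0: "occupancy 0 = (\<lambda>f i. 0)" by (auto simp: occupancy_def fun_eq_iff)
    have p0: "poisson (real 0 / real n) = return_pmf 0" by (simp add: poisson_def)
    have "?Pi = return_pmf (\<lambda>_. 0)" using True p0 by simp
    then have "measure_pmf.expectation ?Pi ?F = ?F (\<lambda>_. 0)" by simp
    moreover have "measure_pmf.expectation (?OD k) ?F = ?F (\<lambda>_. 0)"
      using True b0 o0 by simp
    moreover have "0 \<le> ?F (\<lambda>_. 0)" by (rule FF_nonneg[OF psdA E])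
    ultimately show ?thesis by simp
  next
    case False
    let ?L = "real k / real n"
    have L: "?L > 0" using False n by simp
    have nL: "real n * ?L = real k" using n by simp
    have pois: "poisson ?L = poisson_pmf ?L" using L by (simp add: poisson_def)
    have Pi_eq: "?Pi = bind_pmf (poisson_pmf (real k)) ?OD"
      using poissonization[OF n L] by (simp only: pois nL)
    let ?G = "\<lambda>m. \<integral>\<^sup>+c. ennreal (?F c) \<partial>?OD m"
    have "(\<integral>\<^sup>+Q. ennreal (?F Q) \<partial>?Pi) = (\<integral>\<^sup>+m. ?G m \<partial>poisson_pmf (real k))"
      unfolding Pi_eq by simp
    also have "\<dots> \<ge> (\<integral>\<^sup>+m. ?G k * indicator {..k} m \<partial>poisson_pmf (real k))"
    proof (intro nn_integral_mono)
      fix m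
      show "?G k * indicator {..k} m \<le> ?G m"
        using G_antimono[OF psdA E th n, where m=m and k=k] by (auto simp: indicator_def)
    qed
    also have "(\<integral>\<^sup>+m. ?G k * indicator {..k} m \<partial>poisson_pmf (real k)) = ?G k * emeasure (poisson_pmf (real k)) {..k}"
      by (rule nn_integral_cmult_indicator) simp
    also have "emeasure (poisson_pmf (real k)) {..k} = ennreal (Gk k (real k))"
    proof -
      have "emeasure (poisson_pmf (real k)) {..k} = ennreal (\<Sum>j\<in>{..k}. pmf (poisson_pmf (real k)) j)"
        by (rule emeasure_measure_pmf_finite) simp
      also have "(\<Sum>j\<in>{..k}. pmf (poisson_pmf (real k)) j) = Gk k (real k)"
        using False by (simp add: Gk_def sum_distrib_left mult.commute)
      finally show ?thesis .
    qed
    finally have ge: "?G k * ennreal (Gk k (real k)) \<le> (\<integral>\<^sup>+Q. ennreal (?F Q) \<partial>?Pi)" .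
    have half: "ennreal (1/2) \<le> ennreal (Gk k (real k))"
      using Gk_half[of k] False by (intro ennreal_leI) simp
    have "?G k * ennreal (1/2) \<le> (\<integral>\<^sup>+Q. ennreal (?F Q) \<partial>?Pi)"
      using ge mult_left_mono[OF half, of "?G k"] by (meson order_trans zero_le)
    then have "ennreal (measure_pmf.expectation (?OD k) ?F) * ennreal (1/2) \<le> ennreal (measure_pmf.expectation ?Pi ?F)"
      by (simp only: FF_nn_integral[OF psdA E th])
    moreover have "ennreal (measure_pmf.expectation (?OD k) ?F * (1/2)) = ennreal (measure_pmf.expectation (?OD k) ?F) * ennreal (1/2)"
    proof (rule ennreal_mult)
      show "0 \<le> measure_pmf.expectation (?OD k) ?F"
        by (intro integral_nonneg_AE) (simp add: FF_nonneg[OF psdA E])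
    qed simp
    ultimately have "ennreal (measure_pmf.expectation (?OD k) ?F * (1/2)) \<le> ennreal (measure_pmf.expectation ?Pi ?F)"
      by simp
    moreover have "0 \<le> measure_pmf.expectation ?Pi ?F"
      by (intro integral_nonneg_AE) (simp add: FF_nonneg[OF psdA E])
    ultimately have "measure_pmf.expectation (?OD k) ?F * (1/2) \<le> measure_pmf.expectation ?Pi ?F"
      by (simp add: ennreal_le_iff)
    then show ?thesis by simp
  qed
  show ?thesis unfolding lhs rhs by (rule key)
qed

end
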